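(* Fix $\eta\in[0,1]$ and an integer $N\ge0$. Let $\mathcal V$ be the set of PMFs $v$ on $\mathcal S\times\mathcal U\times\mathcal Q\times\mathcal X\times\mathcal S\times\mathcal U\times\mathcal Q$ whose support is contained in the set $\mathcal A$ of tuples $(s,u,q,x,s^{+},u^{+},q^{+})$ with $u\in[0:q]$ and $u^{+}\in\{0,u+1\}$ if $q\le N-1$, $u\in[0:N]$ and $u^{+}=0$ if $q=N$, $x=f(u^{+},s)$ and $q^{+}=g_L(q,x)$, and which satisfy: (1) (stationarity) $v_{S,U,Q}(s,u,q)=v_{S^{+},U^{+},Q^{+}}(s,u,q)$ for all $(s,u,q)$; (2) (state law) $v(s,u,q,x,s^{+},u^{+},q^{+})=\Big(\sum_{\tilde s^{+}}v(s,u,q,x,\tilde s^{+},u^{+},q^{+})\Big)P(s^{+}\mid x,s)$ for all tuples in $\mathcal A$; (3) (policy) $v_{S,U,Q,U^{+}}(0,u,q,u^{+})=\bar\eta^{\,u+1}\,v_{U,Q,U^{+}}(u,q,u^{+})$ for all $(u,q,u^{+})$; (4) $\sum v=1$, $v\ge0$. Then the problem of maximizing $I_v(U^{+},U;X\mid Q)$ (conditional mutual information under $v$) over $v\in\mathcal V$ is a convex optimization problem: all constraints are linear equalities/nonnegativity in $v$, and the objective is concave in $v$ on $\mathcal V$.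
   Context: $\bar\eta=1-\eta$, $[a:b]=\{a,\dots,b\}$, $\mathcal S=\mathcal X=\{0,1\}$, $\mathcal U=\mathcal Q=[0:N]$. $f(u^{+},s)=s\,\mathbb{1}\{u^{+}=0\}$. $g_L:\mathcal Q\times\{0,1\}\to\mathcal Q$ is given by $g_L(q,1)=0$ for all $q$, $g_L(q,0)=q+1$ for $q\in[0:N-1]$, $g_L(N,0)=0$. $P(s^{+}\mid x,s)$ is the battery law of the binary energy-harvesting channel: $P(S^{+}=0\mid x,s)=\bar\eta\,\mathbb{1}\{x=s\}$ and $P(S^{+}=1\mid x,s)=1-\bar\eta\,\mathbb{1}\{x=s\}$ for $x\le s$. Marginals of $v$ are denoted by subscripts, e.g. $v_{S,U,Q}$. *)

theory Defs
  imports "HOL-Analysis.Analysis" "HOL-Library.Function_Algebras"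
begin

text \<open>Real-valued functions (here: unnormalised PMFs on a tuple type) form a real vector
  space under pointwise operations; this lets us use the library notions convex / concave_on.\<close>

instantiation "fun" :: (type, real_vector) real_vector
begin
definition scaleR_fun :: "real \<Rightarrow> ('a \<Rightarrow> 'b) \<Rightarrow> 'a \<Rightarrow> 'b"
  where "scaleR_fun r f = (\<lambda>x. r *\<^sub>R f x)"
instance
  by standard (auto simp: scaleR_fun_def fun_eq_iff scaleR_add_right scaleR_add_left)
end

type_synonym tup = "nat \<times> nat \<times> nat \<times> nat \<times> nat \<times> nat \<times> nat"
  \<comment> \<open>(s, u, q, x, s+, u+, q+)\<close>

definition f_enc :: "nat \<Rightarrow> nat \<Rightarrow> nat" where
  "f_enc up s = (if up = 0 then s else 0)"

definition gL :: "nat \<Rightarrow> nat \<Rightarrow> nat \<Rightarrow> nat" where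
  "gL N q x = (if x = 1 then 0 else if q < N then q + 1 else 0)"

text \<open>Battery law P(s+ | x, s) of the binary energy-harvesting channel.\<close>
definition Pbat :: "real \<Rightarrow> nat \<Rightarrow> nat \<Rightarrow> nat \<Rightarrow> real" where
  "Pbat \<eta> sp x s = (if sp = 0 then (1 - \<eta>) * (if x = s then 1 else 0)
                     else 1 - (1 - \<eta>) * (if x = s then 1 else 0))"

definition Sset :: "nat set" where "Sset = {0, 1}"

definition Aset :: "nat \<Rightarrow> tup set" where
  "Aset N = {(s, u, q, x, sp, up, qp).
     s \<in> Sset \<and> sp \<in> Sset \<and> q \<in> {0..N} \<and>
     (if q < N then u \<in> {0..q} \<and> up \<in> {0, u + 1}
      else u \<in> {0..N} \<and> up = 0) \<and>
     x = f_enc up s \<and> qp = gL N q x}"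

definition Dset :: "nat \<Rightarrow> tup set" where
  "Dset N = Sset \<times> {0..N} \<times> {0..N} \<times> Sset \<times> Sset \<times> {0..N} \<times> {0..N}"

definition Vset :: "real \<Rightarrow> nat \<Rightarrow> (tup \<Rightarrow> real) set" where
  "Vset \<eta> N = {v.
     (\<forall>t. t \<notin> Aset N \<longrightarrow> v t = 0) \<and>
     \<comment> \<open>(1) stationarity\<close>
     (\<forall>s\<in>Sset. \<forall>u\<in>{0..N}. \<forall>q\<in>{0..N}.
        (\<Sum>(x, sp, up, qp) \<in> Sset \<times> Sset \<times> {0..N} \<times> {0..N}. v (s, u, q, x, sp, up, qp))
      = (\<Sum>(s', u', q', x) \<in> Sset \<times> {0..N} \<times> {0..N} \<times> Sset. v (s', u', q', x, s, u, q))) \<and>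
     \<comment> \<open>(2) state law\<close>
     (\<forall>(s, u, q, x, sp, up, qp) \<in> Aset N.
        v (s, u, q, x, sp, up, qp)
      = (\<Sum>sp'\<in>Sset. v (s, u, q, x, sp', up, qp)) * Pbat \<eta> sp x s) \<and>
     \<comment> \<open>(3) policy\<close>
     (\<forall>u\<in>{0..N}. \<forall>q\<in>{0..N}. \<forall>up\<in>{0..N}.
        (\<Sum>(x, sp, qp) \<in> Sset \<times> Sset \<times> {0..N}. v (0, u, q, x, sp, up, qp))
      = (1 - \<eta>) ^ (u + 1) *
        (\<Sum>(s, x, sp, qp) \<in> Sset \<times> Sset \<times> Sset \<times> {0..N}. v (s, u, q, x, sp, up, qp))) \<and>
     \<comment> \<open>(4) normalisation and nonnegativity\<close>
     (\<Sum>t\<in>Dset N. v t) = 1 \<and> (\<forall>t. v t \<ge> 0)}"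

definition cond_mutual_info ::
  "('a \<times> 'b \<times> 'c \<Rightarrow> real) \<Rightarrow> 'a set \<Rightarrow> 'b set \<Rightarrow> 'c set \<Rightarrow> real" where
  "cond_mutual_info p A B C =
     (\<Sum>(a, b, c) \<in> A \<times> B \<times> C.
        let pabc = p (a, b, c);
            pc = (\<Sum>(a', b') \<in> A \<times> B. p (a', b', c));
            pac = (\<Sum>b'\<in>B. p (a, b', c));
            pbc = (\<Sum>a'\<in>A. p (a', b, c))
        in if pabc = 0 then 0 else pabc * log 2 (pabc * pc / (pac * pbc)))"

text \<open>I_v(U+,U; X | Q): A = (U+, U), B = X, C = Q.\<close>
definition objective :: "nat \<Rightarrow> (tup \<Rightarrow> real) \<Rightarrow> real" where
  "objective N v = cond_mutual_info
     (\<lambda>((up, u), x, q). \<Sum>(s, sp, qp) \<in> Sset \<times> Sset \<times> {0..N}. v (s, u, q, x, sp, up, qp))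
     ({0..N} \<times> {0..N}) Sset {0..N}"

end

theory Submission
  imports Defs
begin

definition E :: "real \<Rightarrow> real \<Rightarrow> real" where
  "E y z = (if y = 0 then 0 else y * ln (y / z))"

lemma E_hom: "0 \<le> t \<Longrightarrow> E (t * y) (t * z) = t * E y z"
  by (cases "t = 0") (auto simp: E_def)

lemma E_sub:
  assumes "0 \<le> y1" "y1 \<le> z1" "0 \<le> y2" "y2 \<le> z2"
  shows "E (y1 + y2) (z1 + z2) \<le> E y1 z1 + E y2 z2"
proof (cases "y1 = 0 \<or> y2 = 0")
  case True
  then show ?thesis
  proof
    assume h: "y1 = 0"
    show ?thesis
    proof (cases "y2 = 0")
      case False
      hence "y2 > 0" "z2 > 0" using assms by auto
      hence "ln (y2 / (z1 + z2)) \<le> ln (y2 / z2)" using assms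
        by (simp add: frac_le divide_left_mono)
      thus ?thesis using h False \<open>y2 > 0\<close> by (simp add: E_def)
    qed (simp add: E_def h)
  next
    assume h: "y2 = 0"
    show ?thesis
    proof (cases "y1 = 0")
      case False
      hence "y1 > 0" "z1 > 0" using assms by auto
      hence "ln (y1 / (z1 + z2)) \<le> ln (y1 / z1)" using assms
        by (simp add: frac_le divide_left_mono)
      thus ?thesis using h False \<open>y1 > 0\<close> by (simp add: E_def)
    qed (simp add: E_def h)
  qed
next
  case False
  hence p: "y1 > 0" "y2 > 0" "z1 > 0" "z2 > 0" using assms by auto
  define Y where "Y = y1 + y2"
  define Z where "Z = z1 + z2"
  have YZ: "Y > 0" "Z > 0" using p by (auto simp: Y_def Z_def)
  have k: "y * ln (y / z) \<ge> y * ln (Y / Z) + y - z * Y / Z" if "y > 0" "z > 0" for y z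
  proof -
    have "ln ((z * Y) / (y * Z)) \<le> (z * Y) / (y * Z) - 1"
      using that YZ by (intro ln_le_minus_one) simp
    moreover have "ln ((z * Y) / (y * Z)) = ln (Y / Z) - ln (y / z)"
      using that YZ by (simp add: ln_div ln_mult)
    ultimately have "ln (Y / Z) - ln (y / z) \<le> (z * Y) / (y * Z) - 1" by simp
    hence "y * (ln (Y / Z) - ln (y / z)) \<le> y * ((z * Y) / (y * Z) - 1)"
      using that by (intro mult_left_mono) auto
    moreover have "y * ((z * Y) / (y * Z) - 1) = z * Y / Z - y" using that YZ by (simp add: field_simps)
    ultimately show ?thesis by (simp add: algebra_simps)
  qed
  have "E y1 z1 + E y2 z2 \<ge> (y1 * ln (Y / Z) + y1 - z1 * Y / Z) + (y2 * ln (Y / Z) + y2 - z2 * Y / Z)"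
    using k[of y1 z1] k[of y2 z2] p by (simp add: E_def)
  also have "(y1 * ln (Y / Z) + y1 - z1 * Y / Z) + (y2 * ln (Y / Z) + y2 - z2 * Y / Z) = Y * ln (Y / Z)"
  proof -
    have "z1 * Y / Z + z2 * Y / Z = Y" using YZ by (simp add: Z_def add_divide_distrib[symmetric] distrib_right[symmetric])
    thus ?thesis by (simp add: Y_def algebra_simps)
  qed
  finally show ?thesis using YZ by (simp add: E_def Y_def Z_def)
qed

lemma cmi_decomp:
  fixes p :: "'a \<times> 'b \<times> 'c \<Rightarrow> real"
  assumes fin: "finite A" "finite B" "finite C"
    and nn: "\<And>a b c. a \<in> A \<Longrightarrow> b \<in> B \<Longrightarrow> c \<in> C \<Longrightarrow> p (a, b, c) \<ge> 0"
  shows "cond_mutual_info p A B C * ln 2 =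
    (\<Sum>(a, b, c) \<in> A \<times> B \<times> C. E (p (a, b, c)) (\<Sum>b'\<in>B. p (a, b', c)))
  - (\<Sum>(b, c) \<in> B \<times> C. E (\<Sum>a'\<in>A. p (a', b, c)) (\<Sum>(a', b') \<in> A \<times> B. p (a', b', c)))"
proof -
  let ?pac = "\<lambda>a c. \<Sum>b'\<in>B. p (a, b', c)"
  let ?pbc = "\<lambda>b c. \<Sum>a'\<in>A. p (a', b, c)"
  let ?pc = "\<lambda>c. \<Sum>(a', b') \<in> A \<times> B. p (a', b', c)"
  have tm: "(if p (a, b, c) = 0 then 0 else p (a, b, c) * log 2 (p (a, b, c) * ?pc c / (?pac a c * ?pbc b c))) * ln 2
      = E (p (a, b, c)) (?pac a c) - p (a, b, c) * ln (?pbc b c / ?pc c)"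
    if abc: "a \<in> A" "b \<in> B" "c \<in> C" for a b c
  proof (cases "p (a, b, c) = 0")
    case True thus ?thesis by (simp add: E_def)
  next
    case False
    hence pos: "p (a, b, c) > 0" using nn[OF abc] by simp
    have "p (a, b, c) \<le> ?pac a c"
      by (rule member_le_sum[where f = "\<lambda>b'. p (a, b', c)"]) (use abc nn fin in auto)
    hence pac: "?pac a c > 0" using pos by simp
    have "p (a, b, c) \<le> ?pbc b c"
      by (rule member_le_sum[where f = "\<lambda>a'. p (a', b, c)"]) (use abc nn fin in auto)
    hence pbc: "?pbc b c > 0" using pos by simp
    have "p (a, b, c) \<le> ?pc c"
      using member_le_sum[where f = "\<lambda>(a', b'). p (a', b', c)" and i = "(a, b)" and A = "A \<times> B"] abc nn fin
      by auto
    hence pc: "?pc c > 0" using pos by simp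
    have "ln (p (a, b, c) * ?pc c / (?pac a c * ?pbc b c)) = ln (p (a, b, c) / ?pac a c) - ln (?pbc b c / ?pc c)"
      using pos pac pbc pc by (simp add: ln_div ln_mult)
    hence "p (a, b, c) * ln (p (a, b, c) * ?pc c / (?pac a c * ?pbc b c)) = p (a, b, c) * ln (p (a, b, c) / ?pac a c) - p (a, b, c) * ln (?pbc b c / ?pc c)"
      by (simp add: right_diff_distrib)
    thus ?thesis using False by (simp add: E_def log_def)
  qed
  have "cond_mutual_info p A B C * ln 2 = (\<Sum>(a, b, c) \<in> A \<times> B \<times> C.
      E (p (a, b, c)) (?pac a c) - p (a, b, c) * ln (?pbc b c / ?pc c))"
    unfolding cond_mutual_info_def Let_def
    apply (subst sum_distrib_right[of _ "A \<times> B \<times> C"])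
    apply (rule sum.cong[OF refl])
    apply clarify
    subgoal for a b c using tm[of a b c] by simp
    done
  also have "\<dots> = (\<Sum>(a, b, c) \<in> A \<times> B \<times> C. E (p (a, b, c)) (?pac a c))
       - (\<Sum>(a, b, c) \<in> A \<times> B \<times> C. p (a, b, c) * ln (?pbc b c / ?pc c))"
    by (simp add: sum_subtractf case_prod_beta')
  also have "(\<Sum>(a, b, c) \<in> A \<times> B \<times> C. p (a, b, c) * ln (?pbc b c / ?pc c))
      = (\<Sum>a\<in>A. \<Sum>(b, c) \<in> B \<times> C. p (a, b, c) * ln (?pbc b c / ?pc c))"
    by (simp add: sum.cartesian_product)
  also have "\<dots> = (\<Sum>(b, c) \<in> B \<times> C. \<Sum>a\<in>A. p (a, b, c) * ln (?pbc b c / ?pc c))"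
    by (subst sum.swap) (simp add: case_prod_beta')
  also have "\<dots> = (\<Sum>(b, c) \<in> B \<times> C. E (?pbc b c) (?pc c))"
    by (rule sum.cong) (auto simp: E_def sum_distrib_right[symmetric])
  finally show ?thesis .
qed

lemma Vset_convex: "convex (Vset \<eta> N)"
proof (rule convexI)
  fix v1 v2 :: "tup \<Rightarrow> real" and t s :: real
  assume v1: "v1 \<in> Vset \<eta> N" and v2: "v2 \<in> Vset \<eta> N" and ts: "0 \<le> t" "0 \<le> s" "t + s = 1"
  have w: "\<And>z. (t *\<^sub>R v1 + s *\<^sub>R v2) z = t * v1 z + s * v2 z" by (simp add: scaleR_fun_def)
  note a1 = v1[unfolded Vset_def mem_Collect_eq split_def]
  note a2 = v2[unfolded Vset_def mem_Collect_eq split_def]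
  note st1 = a1[THEN conjunct2, THEN conjunct2, THEN conjunct1]
  note st2 = a2[THEN conjunct2, THEN conjunct2, THEN conjunct1]
  note po1 = a1[THEN conjunct2, THEN conjunct2, THEN conjunct2, THEN conjunct1]
  note po2 = a2[THEN conjunct2, THEN conjunct2, THEN conjunct2, THEN conjunct1]
  note nn1 = a1[THEN conjunct2, THEN conjunct2, THEN conjunct2, THEN conjunct2, THEN conjunct2]
  note nn2 = a2[THEN conjunct2, THEN conjunct2, THEN conjunct2, THEN conjunct2, THEN conjunct2]
  show "t *\<^sub>R v1 + s *\<^sub>R v2 \<in> Vset \<eta> N"
    using v1 v2 ts unfolding Vset_def mem_Collect_eq w
    apply (simp only: split_def sum.distrib sum_distrib_left[symmetric])
    apply (elim conjE)
    apply (intro conjI)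
    apply simp
    apply simp
    subgoal premises prems
      apply (intro ballI)
      subgoal for p using st1[rule_format, of p] st2[rule_format, of p] by (simp add: algebra_simps)
      done
    subgoal premises prems
      apply (intro ballI)
      subgoal for u q up using po1[rule_format, of u q up] po2[rule_format, of u q up] by (simp add: ring_distribs mult.left_commute)
      done
    apply simp
    subgoal using nn1 nn2 ts by (simp add: add_nonneg_nonneg mult_nonneg_nonneg)
    done
qed

lemma E_scale: "0 \<le> \<alpha> \<Longrightarrow> 0 \<le> P \<Longrightarrow> E (\<alpha> * P) P = P * E \<alpha> 1"
  by (cases "\<alpha> = 0 \<or> P = 0") (auto simp: E_def)

lemma pbc_le:
  fixes q :: "'a \<times> 'b \<times> 'c \<Rightarrow> real"
  assumes "finite A" "finite B" "b \<in> B" "\<And>x. q x \<ge> 0"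
  shows "(\<Sum>a\<in>A. q (a, b, c)) \<le> (\<Sum>(a', b') \<in> A \<times> B. q (a', b', c))"
proof -
  have "(\<Sum>a\<in>A. q (a, b, c)) \<le> (\<Sum>a\<in>A. \<Sum>b'\<in>B. q (a, b', c))"
    by (rule sum_mono, rule member_le_sum[where f = "\<lambda>b'. q (_, b', c)"]) (use assms in auto)
  also have "\<dots> = (\<Sum>(a', b') \<in> A \<times> B. q (a', b', c))"
    by (simp add: sum.cartesian_product)
  finally show ?thesis .
qed

lemma H_convex:
  fixes p p1 p2 :: "'a \<times> 'b \<times> 'c \<Rightarrow> real"
  assumes fin: "finite A" "finite B" "finite C"
    and nn: "\<And>x. p1 x \<ge> 0" "\<And>x. p2 x \<ge> 0" and ts: "0 \<le> t" "0 \<le> s"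
    and pp: "\<And>x. p x = t * p1 x + s * p2 x"
  shows "(\<Sum>(b, c) \<in> B \<times> C. E (\<Sum>a'\<in>A. p (a', b, c)) (\<Sum>(a', b') \<in> A \<times> B. p (a', b', c)))
    \<le> t * (\<Sum>(b, c) \<in> B \<times> C. E (\<Sum>a'\<in>A. p1 (a', b, c)) (\<Sum>(a', b') \<in> A \<times> B. p1 (a', b', c)))
      + s * (\<Sum>(b, c) \<in> B \<times> C. E (\<Sum>a'\<in>A. p2 (a', b, c)) (\<Sum>(a', b') \<in> A \<times> B. p2 (a', b', c)))"
proof -
  have "(\<Sum>(b, c) \<in> B \<times> C. E (\<Sum>a'\<in>A. p (a', b, c)) (\<Sum>(a', b') \<in> A \<times> B. p (a', b', c)))
    \<le> (\<Sum>(b, c) \<in> B \<times> C. t * E (\<Sum>a'\<in>A. p1 (a', b, c)) (\<Sum>(a', b') \<in> A \<times> B. p1 (a', b', c))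
       + s * E (\<Sum>a'\<in>A. p2 (a', b, c)) (\<Sum>(a', b') \<in> A \<times> B. p2 (a', b', c)))"
  proof (rule sum_mono, clarify)
    fix b c assume bc: "b \<in> B" "c \<in> C"
    define y1 where "y1 = (\<Sum>a'\<in>A. p1 (a', b, c))"
    define y2 where "y2 = (\<Sum>a'\<in>A. p2 (a', b, c))"
    define z1 where "z1 = (\<Sum>(a', b') \<in> A \<times> B. p1 (a', b', c))"
    define z2 where "z2 = (\<Sum>(a', b') \<in> A \<times> B. p2 (a', b', c))"
    have y: "(\<Sum>a'\<in>A. p (a', b, c)) = t * y1 + s * y2"
      by (simp add: pp y1_def y2_def sum.distrib sum_distrib_left)
    have z: "(\<Sum>(a', b') \<in> A \<times> B. p (a', b', c)) = t * z1 + s * z2"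
      by (simp add: pp z1_def z2_def split_def sum.distrib sum_distrib_left)
    have le1: "y1 \<le> z1" unfolding y1_def z1_def by (rule pbc_le) (use fin bc nn in auto)
    have le2: "y2 \<le> z2" unfolding y2_def z2_def by (rule pbc_le) (use fin bc nn in auto)
    have g1: "0 \<le> y1" "0 \<le> y2" unfolding y1_def y2_def by (auto intro: sum_nonneg nn)
    have "E (t * y1 + s * y2) (t * z1 + s * z2) \<le> E (t * y1) (t * z1) + E (s * y2) (s * z2)"
      by (rule E_sub) (use le1 le2 g1 ts in \<open>auto intro: mult_left_mono\<close>)
    also have "\<dots> = t * E y1 z1 + s * E y2 z2" using ts by (simp add: E_hom)
    finally show "E (\<Sum>a'\<in>A. p (a', b, c)) (\<Sum>(a', b') \<in> A \<times> B. p (a', b', c))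
      \<le> t * E (\<Sum>a'\<in>A. p1 (a', b, c)) (\<Sum>(a', b') \<in> A \<times> B. p1 (a', b', c))
       + s * E (\<Sum>a'\<in>A. p2 (a', b, c)) (\<Sum>(a', b') \<in> A \<times> B. p2 (a', b', c))"
      using y z by (simp add: y1_def y2_def z1_def z2_def)
  qed
  also have "\<dots> = t * (\<Sum>(b, c) \<in> B \<times> C. E (\<Sum>a'\<in>A. p1 (a', b, c)) (\<Sum>(a', b') \<in> A \<times> B. p1 (a', b', c)))
      + s * (\<Sum>(b, c) \<in> B \<times> C. E (\<Sum>a'\<in>A. p2 (a', b, c)) (\<Sum>(a', b') \<in> A \<times> B. p2 (a', b', c)))"
    by (simp add: split_def sum.distrib sum_distrib_left)
  finally show ?thesis .
qed

definition mg :: "nat \<Rightarrow> (tup \<Rightarrow> real) \<Rightarrow> (nat \<times> nat) \<times> nat \<times> nat \<Rightarrow> real" where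
  "mg N v = (\<lambda>((up, u), x, q). \<Sum>(s, sp, qp) \<in> Sset \<times> Sset \<times> {0..N}. v (s, u, q, x, sp, up, qp))"

lemma objective_mg: "objective N v = cond_mutual_info (mg N v) ({0..N} \<times> {0..N}) Sset {0..N}"
  by (simp add: objective_def mg_def)

lemma mg_nn: "(\<And>t. v t \<ge> 0) \<Longrightarrow> mg N v z \<ge> 0"
  by (cases z) (auto simp: mg_def intro!: sum_nonneg)

lemma mg_lin: "mg N (t *\<^sub>R v1 + s *\<^sub>R v2) z = t * mg N v1 z + s * mg N v2 z"
  by (cases z) (simp add: mg_def scaleR_fun_def split_def sum.distrib sum_distrib_left)

lemma supp: "v \<in> Vset \<eta> N \<Longrightarrow> x \<noteq> f_enc up s \<Longrightarrow> v (s, u, q, x, sp, up, qp) = 0"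
  unfolding Vset_def by (auto simp: Aset_def)

definition G :: "real \<Rightarrow> nat \<times> nat \<Rightarrow> nat \<Rightarrow> real" where
  "G \<eta> a b = (if fst a \<noteq> 0 then 0 else if b = 0 then E ((1 - \<eta>) ^ (snd a + 1)) 1
      else E (1 - (1 - \<eta>) ^ (snd a + 1)) 1)"

lemma key_up0:
  assumes v: "v \<in> Vset \<eta> N" and uq: "u \<le> N" "q \<le> N"
  shows "mg N v ((0, u), 0, q) = (1 - \<eta>) ^ (u + 1) * (mg N v ((0, u), 0, q) + mg N v ((0, u), 1, q))"
proof -
  have po: "(\<Sum>(x, sp, qp) \<in> Sset \<times> Sset \<times> {0..N}. v (0, u, q, x, sp, 0, qp))
      = (1 - \<eta>) ^ (u + 1) *
        (\<Sum>(s, x, sp, qp) \<in> Sset \<times> Sset \<times> Sset \<times> {0..N}. v (s, u, q, x, sp, 0, qp))"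
    using v uq unfolding Vset_def by auto
  have z1: "v (Suc 0, u, q, 0, sp, 0, qp) = 0" for sp qp by (rule supp[OF v]) (simp add: f_enc_def)
  have z2: "v (0, u, q, Suc 0, sp, 0, qp) = 0" for sp qp by (rule supp[OF v]) (simp add: f_enc_def)
  show ?thesis using po
    by (simp add: mg_def Sset_def sum.cartesian_product' z1 z2 add_ac)
qed

lemma lin_part:
  assumes v: "v \<in> Vset \<eta> N" and eta: "0 \<le> \<eta>" "\<eta> \<le> 1"
    and a: "a \<in> {0..N} \<times> {0..N}" and b: "b \<in> Sset" and c: "c \<in> {0..N}"
  shows "E (mg N v (a, b, c)) (\<Sum>b'\<in>Sset. mg N v (a, b', c)) = (\<Sum>b'\<in>Sset. mg N v (a, b', c)) * G \<eta> a b"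
proof -
  obtain up u where a': "a = (up, u)" by (cases a)
  have nn: "\<And>t. v t \<ge> 0" using v unfolding Vset_def by auto
  have S: "(\<Sum>b'\<in>Sset. mg N v (a, b', c)) = mg N v (a, 0, c) + mg N v (a, 1, c)"
    by (simp add: Sset_def)
  show ?thesis
  proof (cases "up = 0")
    case False
    have z0: "mg N v ((up, u), Suc 0, c) = 0"
      unfolding mg_def using supp[OF v] False by (auto simp: f_enc_def intro!: sum.neutral)
    show ?thesis using b False unfolding S a' by (auto simp: Sset_def G_def E_def z0)
  next
    case True
    define \<alpha> where "\<alpha> = (1 - \<eta>) ^ (u + 1)"
    define P where "P = mg N v (a, 0, c) + mg N v (a, 1, c)"
    have al: "0 \<le> \<alpha>" "\<alpha> \<le> 1" using eta unfolding \<alpha>_def by (auto intro: power_le_one simp del: power_Suc)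
    have P: "0 \<le> P" unfolding P_def using mg_nn[OF nn] by (auto intro: add_nonneg_nonneg)
    have k0: "mg N v (a, 0, c) = \<alpha> * P"
      unfolding P_def \<alpha>_def a' True using key_up0[OF v, of u c] a c by (auto simp: a')
    have k1: "mg N v (a, 1, c) = (1 - \<alpha>) * P"
      using k0 unfolding P_def by (simp add: algebra_simps)
    show ?thesis
    proof (cases "b = 0")
      case True
      thus ?thesis using k0 E_scale[OF al(1) P] \<open>up = 0\<close> unfolding S P_def[symmetric]
        by (simp add: G_def a' \<alpha>_def)
    next
      case False
      hence "b = 1" using b by (simp add: Sset_def)
      thus ?thesis using k1 E_scale[of "1 - \<alpha>", OF _ P] al \<open>up = 0\<close> unfolding S P_def[symmetric]
        by (simp add: G_def a' \<alpha>_def)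
    qed
  qed
qed

theorem lemma1:
  fixes \<eta> :: real and N :: nat
  assumes "0 \<le> \<eta>" and "\<eta> \<le> 1"
  shows "convex (Vset \<eta> N) \<and> concave_on (Vset \<eta> N) (objective N)"
proof -
  define A where "A = {0..N} \<times> {0..N}"
  define Lin where "Lin v = (\<Sum>(a, b, c) \<in> A \<times> Sset \<times> {0..N}. (\<Sum>b'\<in>Sset. mg N v (a, b', c)) * G \<eta> a b)" for v
  define H where "H v = (\<Sum>(b, c) \<in> Sset \<times> {0..N}. E (\<Sum>a'\<in>A. mg N v (a', b, c))
      (\<Sum>(a', b') \<in> A \<times> Sset. mg N v (a', b', c)))" for v
  have finS: "finite Sset" by (simp add: Sset_def)
  have finA: "finite A" by (simp add: A_def)
  have nnV: "\<And>t. v t \<ge> 0" if "v \<in> Vset \<eta> N" for v using that unfolding Vset_def by auto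
  have dec: "objective N v * ln 2 = Lin v - H v" if v: "v \<in> Vset \<eta> N" for v
  proof -
    have "objective N v * ln 2 = (\<Sum>(a, b, c) \<in> A \<times> Sset \<times> {0..N}. E (mg N v (a, b, c)) (\<Sum>b'\<in>Sset. mg N v (a, b', c))) - H v"
      unfolding objective_mg H_def A_def
      by (rule cmi_decomp) (use finS mg_nn[OF nnV[OF v]] in auto)
    also have "(\<Sum>(a, b, c) \<in> A \<times> Sset \<times> {0..N}. E (mg N v (a, b, c)) (\<Sum>b'\<in>Sset. mg N v (a, b', c))) = Lin v"
      unfolding Lin_def by (rule sum.cong) (auto simp: A_def intro!: lin_part[OF v assms])
    finally show ?thesis .
  qed
  have cvx: "convex (Vset \<eta> N)" by (rule Vset_convex)
  have "concave_on (Vset \<eta> N) (objective N)"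
    unfolding concave_on_iff
  proof (intro conjI cvx ballI allI impI)
    fix v1 v2 :: "tup \<Rightarrow> real" and t s :: real
    assume v1: "v1 \<in> Vset \<eta> N" and v2: "v2 \<in> Vset \<eta> N" and ts: "0 \<le> t" "0 \<le> s" "t + s = 1"
    let ?w = "t *\<^sub>R v1 + s *\<^sub>R v2"
    have w: "?w \<in> Vset \<eta> N" using convexD[OF cvx v1 v2 ts] .
    have L: "Lin ?w = t * Lin v1 + s * Lin v2"
      unfolding Lin_def by (simp add: mg_lin split_def sum.distrib sum_distrib_left algebra_simps)
    have Hle: "H ?w \<le> t * H v1 + s * H v2"
      unfolding H_def
      by (rule H_convex[OF finA finS _ _ _ ts(1) ts(2) mg_lin]) (use mg_nn nnV[OF v1] nnV[OF v2] in auto)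
    have "(t * objective N v1 + s * objective N v2) * ln 2 = t * (Lin v1 - H v1) + s * (Lin v2 - H v2)"
      using dec[OF v1] dec[OF v2] by (simp add: distrib_right mult.assoc)
    also have "\<dots> \<le> objective N ?w * ln 2" using dec[OF w] L Hle by (simp add: algebra_simps)
    finally show "t * objective N v1 + s * objective N v2 \<le> objective N ?w"
      by (simp add: mult_le_cancel_right)
  qed
  with cvx show ?thesis by simp
qed

end
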